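(* Let $A\in\mathbb{R}^{m\times n}$ be a sub-Gaussian random matrix with variance proxy $\sigma^2>0$. Then for any $\delta\in(0,1)$ and any $\varepsilon\in(0,1)$, $$\mathbb{P}\left(\|A\|\le \sigma\sqrt{\frac{\log\frac{1}{1-\varepsilon^2}}{\varepsilon^4}(m+n)+\frac{2}{\varepsilon^4}\log\frac{1}{\delta}}\right)\ge 1-\delta,$$ where $\|A\|$ denotes the operator norm of $A$ (largest singular value).
   Context: A random matrix $A\in\mathbb{R}^{m\times n}$ is sub-Gaussian with variance proxy $\sigma^2$ if $\mathbb{E}[A]=0$ and $\mathbb{E}\left[e^{\lambda u^\top A v}\right]\le e^{\lambda^2\sigma^2/2}$ for all $\lambda\in\mathbb{R}$, all $u\in\mathcal{S}^{m-1}$ and all $v\in\mathcal{S}^{n-1}$, where $\mathcal{S}^{k-1}=\{x\in\mathbb{R}^k:\|x\|=1\}$ is the Euclidean unit sphere. No independence of the entries of $A$ is assumed. *)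

theory Defs
  imports "HOL-Analysis.Analysis" "HOL-Probability.Probability"
begin

text \<open>No independence of the entries is assumed.\<close>

definition subgaussian_matrix ::
  "'a measure \<Rightarrow> ('a \<Rightarrow> real^'n^'m) \<Rightarrow> real \<Rightarrow> bool" where
  "subgaussian_matrix M A s \<longleftrightarrow>
     A \<in> borel_measurable M \<and>
     (\<forall>i j. integrable M (\<lambda>w. A w $ i $ j) \<and> (\<integral>w. A w $ i $ j \<partial>M) = 0) \<and>
     (\<forall>l::real. \<forall>u::real^'m. \<forall>v::real^'n. norm u = 1 \<longrightarrow> norm v = 1 \<longrightarrow>
        integrable M (\<lambda>w. exp (l * (u \<bullet> (A w *v v)))) \<and>
        (\<integral>w. exp (l * (u \<bullet> (A w *v v))) \<partial>M) \<le> exp (l\<^sup>2 * s\<^sup>2 / 2))"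

end

theory Submission
  imports Defs
begin


lemma meas_entry[measurable]:
  fixes A :: "'a \<Rightarrow> real^'n^'m"
  assumes "A \<in> borel_measurable M"
  shows "(\<lambda>w. A w $ i $ j) \<in> borel_measurable M"
proof -
  have "(\<lambda>x::real^'n^'m. x $ i $ j) \<in> borel_measurable borel"
    by (intro borel_measurable_continuous_onI continuous_intros)
  from measurable_compose[OF assms this] show ?thesis by simp
qed

lemma prod_density_integral:
  fixes d f :: "'i::finite \<Rightarrow> real \<Rightarrow> real"
  assumes dm[measurable]: "\<And>k. d k \<in> borel_measurable borel" and dnn: "\<And>k x. 0 \<le> d k x"
  and fm[measurable]: "\<And>k. f k \<in> borel_measurable borel"
  and int: "\<And>k. integrable lborel (\<lambda>x. d k x * f k x)"
  shows "integrable (density (PiM UNIV (\<lambda>_. lborel)) (\<lambda>z. \<Prod>k\<in>UNIV. d k (z k))) (\<lambda>z. \<Prod>k\<in>UNIV. f k (z k))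
     \<and> integral\<^sup>L (density (PiM UNIV (\<lambda>_. lborel)) (\<lambda>z. \<Prod>k\<in>UNIV. d k (z k))) (\<lambda>z. \<Prod>k\<in>UNIV. f k (z k))
       = (\<Prod>k\<in>UNIV. \<integral>x. d k x * f k x \<partial>lborel)"
proof -
  interpret product_sigma_finite "\<lambda>_::'i. lborel :: real measure" by standard
  have eq: "(\<lambda>z. (\<Prod>k\<in>UNIV. d k (z k)) *\<^sub>R (\<Prod>k\<in>UNIV. f k (z k))) = (\<lambda>z. \<Prod>k\<in>UNIV. d k (z k) * f k (z k))"
    by (simp add: prod.distrib)
  have m1: "(\<lambda>z. \<Prod>k\<in>UNIV. d k (z k)) \<in> borel_measurable (PiM UNIV (\<lambda>_::'i. lborel :: real measure))"
    by measurable
  have m2: "(\<lambda>z. \<Prod>k\<in>UNIV. f k (z k)) \<in> borel_measurable (PiM UNIV (\<lambda>_::'i. lborel :: real measure))"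
    by measurable
  have nn: "AE z in PiM UNIV (\<lambda>_::'i. lborel). 0 \<le> (\<Prod>k\<in>UNIV. d k (z k))"
    by (auto intro!: prod_nonneg dnn)
  have i1: "integrable (PiM UNIV (\<lambda>_. lborel)) (\<lambda>z. \<Prod>k\<in>UNIV. d k (z k) * f k (z k))"
    using product_integrable_prod[of UNIV "\<lambda>k x. d k x * f k x"] int by simp
  have i2: "integral\<^sup>L (PiM UNIV (\<lambda>_. lborel)) (\<lambda>z. \<Prod>k\<in>UNIV. d k (z k) * f k (z k)) = (\<Prod>k\<in>UNIV. \<integral>x. d k x * f k x \<partial>lborel)"
    using product_integral_prod[of UNIV "\<lambda>k x. d k x * f k x"] int by simp
  show ?thesis
    using i1 i2 integrable_density[OF m2 m1 nn] integral_density[OF m2 m1 nn] eq by simp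
qed

lemma prod_two:
  fixes F :: "'i::finite \<Rightarrow> real"
  assumes "a \<noteq> b" "\<And>k. k \<noteq> a \<Longrightarrow> k \<noteq> b \<Longrightarrow> F k = 1"
  shows "(\<Prod>k\<in>UNIV. F k) = F a * F b"
proof -
  have "(\<Prod>k\<in>UNIV. F k) = F a * (\<Prod>k\<in>UNIV-{a}. F k)"
    by (simp add: prod.remove)
  also have "(\<Prod>k\<in>UNIV-{a}. F k) = F b * (\<Prod>k\<in>UNIV-{a}-{b}. F k)"
    using assms(1) by (subst prod.remove[of _ b]) auto
  also have "(\<Prod>k\<in>UNIV-{a}-{b}. F k) = 1"
    using assms(2) by (intro prod.neutral) auto
  finally show ?thesis by simp
qed

lemma prod_one:
  fixes F :: "'i::finite \<Rightarrow> real"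
  assumes "\<And>k. k \<noteq> a \<Longrightarrow> F k = 1"
  shows "(\<Prod>k\<in>UNIV. F k) = F a"
proof -
  have "(\<Prod>k\<in>UNIV. F k) = F a * (\<Prod>k\<in>UNIV-{a}. F k)"
    by (simp add: prod.remove)
  also have "(\<Prod>k\<in>UNIV-{a}. F k) = 1"
    using assms by (intro prod.neutral) auto
  finally show ?thesis by simp
qed

lemma pair_expect:
  fixes d :: "'i::finite \<Rightarrow> real \<Rightarrow> real" and f g :: "real \<Rightarrow> real"
  assumes dm[measurable]: "\<And>k. d k \<in> borel_measurable borel" and dnn: "\<And>k x. 0 \<le> d k x"
  and d1: "\<And>k. integrable lborel (d k)" "\<And>k. integral\<^sup>L lborel (d k) = 1"
  and ab: "a \<noteq> b"
  and fm[measurable]: "f \<in> borel_measurable borel" and gm[measurable]: "g \<in> borel_measurable borel"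
  and fi: "integrable lborel (\<lambda>x. d a x * f x)" and gi: "integrable lborel (\<lambda>x. d b x * g x)"
  shows "integrable (density (PiM UNIV (\<lambda>_. lborel)) (\<lambda>z. \<Prod>k\<in>UNIV. d k (z k))) (\<lambda>z. f (z a) * g (z b))
     \<and> integral\<^sup>L (density (PiM UNIV (\<lambda>_. lborel)) (\<lambda>z. \<Prod>k\<in>UNIV. d k (z k))) (\<lambda>z. f (z a) * g (z b))
       = (\<integral>x. d a x * f x \<partial>lborel) * (\<integral>x. d b x * g x \<partial>lborel)"
proof -
  define F where "F = (\<lambda>k. if k = a then f else if k = b then g else (\<lambda>_::real. 1::real))"
  have Fm: "\<And>k. F k \<in> borel_measurable borel" unfolding F_def by auto
  have Fi: "\<And>k. integrable lborel (\<lambda>x. d k x * F k x)"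
    unfolding F_def using fi gi d1 by auto
  have e1: "\<And>z. (\<Prod>k\<in>UNIV. F k (z k)) = f (z a) * g (z b)"
    by (subst prod_two[OF ab]) (auto simp: F_def ab ab[symmetric])
  have e2: "(\<Prod>k\<in>UNIV. \<integral>x. d k x * F k x \<partial>lborel) = (\<integral>x. d a x * f x \<partial>lborel) * (\<integral>x. d b x * g x \<partial>lborel)"
    by (subst prod_two[OF ab]) (auto simp: F_def ab ab[symmetric] d1)
  show ?thesis
    using prod_density_integral[of d F, OF dm dnn Fm Fi] e1 e2 by simp
qed

lemma single_expect:
  fixes d :: "'i::finite \<Rightarrow> real \<Rightarrow> real" and f :: "real \<Rightarrow> real"
  assumes dm[measurable]: "\<And>k. d k \<in> borel_measurable borel" and dnn: "\<And>k x. 0 \<le> d k x"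
  and d1: "\<And>k. integrable lborel (d k)" "\<And>k. integral\<^sup>L lborel (d k) = 1"
  and fm[measurable]: "f \<in> borel_measurable borel"
  and fi: "integrable lborel (\<lambda>x. d a x * f x)"
  shows "integrable (density (PiM UNIV (\<lambda>_. lborel)) (\<lambda>z. \<Prod>k\<in>UNIV. d k (z k))) (\<lambda>z. f (z a))
     \<and> integral\<^sup>L (density (PiM UNIV (\<lambda>_. lborel)) (\<lambda>z. \<Prod>k\<in>UNIV. d k (z k))) (\<lambda>z. f (z a))
       = (\<integral>x. d a x * f x \<partial>lborel)"
proof -
  define F where "F = (\<lambda>k. if k = a then f else (\<lambda>_::real. 1::real))"
  have Fm: "\<And>k. F k \<in> borel_measurable borel" unfolding F_def by auto
  have Fi: "\<And>k. integrable lborel (\<lambda>x. d k x * F k x)"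
    unfolding F_def using fi d1 by auto
  have e1: "\<And>z. (\<Prod>k\<in>UNIV. F k (z k)) = f (z a)"
    by (subst prod_one[where a=a]) (auto simp: F_def)
  have e2: "(\<Prod>k\<in>UNIV. \<integral>x. d k x * F k x \<partial>lborel) = (\<integral>x. d a x * f x \<partial>lborel)"
    by (subst prod_one[where a=a]) (auto simp: F_def d1)
  show ?thesis
    using prod_density_integral[of d F, OF dm dnn Fm Fi] e1 e2 by simp
qed

lemma normal_quad:
  fixes \<tau> :: real
  assumes "0 < \<tau>"
  shows "integrable lborel (\<lambda>x. normal_density \<mu> \<tau> x * (c0 + c1 * x + c2 * x\<^sup>2))
    \<and> (\<integral>x. normal_density \<mu> \<tau> x * (c0 + c1 * x + c2 * x\<^sup>2) \<partial>lborel) = c0 + c1 * \<mu> + c2 * (\<mu>\<^sup>2 + \<tau>\<^sup>2)"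
proof -
  note h0 = normal_moment_even[OF assms, of \<mu> 0]
  note h1 = normal_moment_odd[OF assms, of \<mu> 0]
  note h2 = normal_moment_even[OF assms, of \<mu> 1]
  have eq: "\<And>x. normal_density \<mu> \<tau> x * (c0 + c1 * x + c2 * x\<^sup>2) =
     (c0 + c1 * \<mu> + c2 * \<mu>\<^sup>2) * (normal_density \<mu> \<tau> x * (x - \<mu>) ^ (2 * 0))
     + (c1 + 2 * c2 * \<mu>) * (normal_density \<mu> \<tau> x * (x - \<mu>) ^ (2 * 0 + 1))
     + c2 * (normal_density \<mu> \<tau> x * (x - \<mu>) ^ (2 * 1))"
    by (simp add: power2_eq_square) (simp add: algebra_simps)
  have hb: "has_bochner_integral lborel (\<lambda>x. normal_density \<mu> \<tau> x * (c0 + c1 * x + c2 * x\<^sup>2))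
      ((c0 + c1 * \<mu> + c2 * \<mu>\<^sup>2) * (fact (2 * 0) / ((2 / \<tau>\<^sup>2)^0 * fact 0))
       + (c1 + 2 * c2 * \<mu>) * 0 + c2 * (fact (2 * 1) / ((2 / \<tau>\<^sup>2)^1 * fact 1)))"
    unfolding eq
    by (intro has_bochner_integral_add has_bochner_integral_mult_right h0 h1 h2)
  have e2: "((c0 + c1 * \<mu> + c2 * \<mu>\<^sup>2) * (fact (2 * 0) / ((2 / \<tau>\<^sup>2)^0 * fact 0))
       + (c1 + 2 * c2 * \<mu>) * 0 + c2 * (fact (2 * 1) / ((2 / \<tau>\<^sup>2)^1 * fact 1))) = c0 + c1 * \<mu> + c2 * (\<mu>\<^sup>2 + \<tau>\<^sup>2)"
    using assms by (simp add: power2_eq_square distrib_left)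
  show ?thesis
    using hb e2 unfolding has_bochner_integral_iff by simp
qed

definition Bf :: "real^'n^'m \<Rightarrow> ('m + 'n \<Rightarrow> real) \<Rightarrow> real" where
  "Bf X z = (\<Sum>i\<in>UNIV. \<Sum>j\<in>UNIV. z (Inl i) * X$i$j * z (Inr j))"

definition Nf :: "('m + 'n \<Rightarrow> real) \<Rightarrow> real" where
  "Nf z = (\<Sum>i\<in>UNIV. (z (Inl i))\<^sup>2) * (\<Sum>j\<in>UNIV. (z (Inr j))\<^sup>2)"

lemma Bf_inner:
  fixes X :: "real^'n^'m"
  shows "Bf X z = (\<chi> i. z (Inl i)) \<bullet> (X *v (\<chi> j. z (Inr j)))"
  by (simp add: Bf_def inner_vec_def matrix_vector_mult_def sum_distrib_left mult.assoc)

lemma Nf_norm: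
  shows "Nf (z :: 'm + 'n \<Rightarrow> real) = (norm (\<chi> i. z (Inl i) :: real^'m))\<^sup>2 * (norm (\<chi> j. z (Inr j) :: real^'n))\<^sup>2"
  by (simp only: Nf_def power2_norm_eq_inner) (simp add: inner_vec_def power2_eq_square)

lemma step1:
  fixes M :: "'a measure" and A :: "'a \<Rightarrow> real^'n^'m" and z :: "'m + 'n \<Rightarrow> real"
  assumes P: "prob_space M" and sg: "subgaussian_matrix M A \<sigma>"
  shows "integrable M (\<lambda>w. exp (l * Bf (A w) z - l\<^sup>2 * \<sigma>\<^sup>2 / 2 * Nf z))
     \<and> (\<integral>w. exp (l * Bf (A w) z - l\<^sup>2 * \<sigma>\<^sup>2 / 2 * Nf z) \<partial>M) \<le> 1"
proof -
  interpret prob_space M by fact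
  define u :: "real^'m" where "u = (\<chi> i. z (Inl i))"
  define v :: "real^'n" where "v = (\<chi> j. z (Inr j))"
  have B: "\<And>w. Bf (A w) z = u \<bullet> (A w *v v)" unfolding u_def v_def by (rule Bf_inner)
  have N: "Nf z = (norm u)\<^sup>2 * (norm v)\<^sup>2" unfolding u_def v_def by (rule Nf_norm)
  show ?thesis
  proof (cases "u = 0 \<or> v = 0")
    case True
    then have "\<And>w. Bf (A w) z = 0" "Nf z = 0" using B N by auto
    then show ?thesis by (simp add: prob_space)
  next
    case False
    then have nu: "norm u > 0" and nv: "norm v > 0" by auto
    define u1 where "u1 = u /\<^sub>R norm u"
    define v1 where "v1 = v /\<^sub>R norm v"
    have n1: "norm u1 = 1" "norm v1 = 1" using nu nv by (auto simp: u1_def v1_def)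
    define l' where "l' = l * norm u * norm v"
    have Be: "\<And>w. l * Bf (A w) z = l' * (u1 \<bullet> (A w *v v1))"
      using nu nv by (simp add: B u1_def v1_def l'_def matrix_vector_mult_scaleR) (simp add: field_simps)
    have Ne: "l\<^sup>2 * \<sigma>\<^sup>2 / 2 * Nf z = l'\<^sup>2 * \<sigma>\<^sup>2 / 2"
      unfolding N l'_def by (simp add: power_mult_distrib)
    have sgi: "integrable M (\<lambda>w. exp (l' * (u1 \<bullet> (A w *v v1))))"
      and sgb: "(\<integral>w. exp (l' * (u1 \<bullet> (A w *v v1))) \<partial>M) \<le> exp (l'\<^sup>2 * \<sigma>\<^sup>2 / 2)"
      using sg n1 unfolding subgaussian_matrix_def by auto
    have eq: "\<And>w. exp (l * Bf (A w) z - l\<^sup>2 * \<sigma>\<^sup>2 / 2 * Nf z) = exp (l' * (u1 \<bullet> (A w *v v1))) / exp (l'\<^sup>2 * \<sigma>\<^sup>2 / 2)"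
      unfolding Be Ne by (simp add: exp_diff)
    show ?thesis
      unfolding eq using sgi sgb by (simp add: divide_le_eq)
  qed
qed


lemma nq1: "0 < t \<Longrightarrow> integrable lborel (\<lambda>x. normal_density \<mu> t x * x) \<and> (\<integral>x. normal_density \<mu> t x * x \<partial>lborel) = \<mu>"
  using normal_quad[of t \<mu> 0 1 0] by simp

lemma nq2: "0 < t \<Longrightarrow> integrable lborel (\<lambda>x. normal_density \<mu> t x * x\<^sup>2) \<and> (\<integral>x. normal_density \<mu> t x * x\<^sup>2 \<partial>lborel) = \<mu>\<^sup>2 + t\<^sup>2"
  using normal_quad[of t \<mu> 0 0 1] by simp

lemma EQ:
  fixes \<mu> :: "'m::finite + 'n::finite \<Rightarrow> real" and X :: "real^'n^'m" and t :: real
  assumes t: "0 < t"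
  defines "Q \<equiv> density (PiM UNIV (\<lambda>_. lborel)) (\<lambda>z. \<Prod>k\<in>UNIV. normal_density (\<mu> k) t (z k))"
  shows "integrable Q (Bf X) \<and> integral\<^sup>L Q (Bf X) = (\<Sum>i\<in>UNIV. \<Sum>j\<in>UNIV. \<mu> (Inl i) * X$i$j * \<mu> (Inr j))"
    and "integrable Q Nf \<and> integral\<^sup>L Q Nf = (\<Sum>i\<in>UNIV. (\<mu> (Inl i))\<^sup>2 + t\<^sup>2) * (\<Sum>j\<in>UNIV. (\<mu> (Inr j))\<^sup>2 + t\<^sup>2)"
    and "integrable Q (\<lambda>z. \<Sum>k\<in>UNIV. ca k + cb k * z k + cc k * (z k)\<^sup>2)
       \<and> integral\<^sup>L Q (\<lambda>z. \<Sum>k\<in>UNIV. ca k + cb k * z k + cc k * (z k)\<^sup>2) = (\<Sum>k\<in>UNIV. ca k + cb k * \<mu> k + cc k * ((\<mu> k)\<^sup>2 + t\<^sup>2))"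
proof -
  let ?d = "\<lambda>k. normal_density (\<mu> k) t"
  have dm: "\<And>k. ?d k \<in> borel_measurable borel" by simp
  have dnn: "\<And>k x. 0 \<le> ?d k x" by simp
  have d1: "\<And>k. integrable lborel (?d k)" "\<And>k. integral\<^sup>L lborel (?d k) = 1" using t by auto
  have pe: "\<And>a b f g. a \<noteq> b \<Longrightarrow> f \<in> borel_measurable borel \<Longrightarrow> g \<in> borel_measurable borel \<Longrightarrow>
     integrable lborel (\<lambda>x. ?d a x * f x) \<Longrightarrow> integrable lborel (\<lambda>x. ?d b x * g x) \<Longrightarrow>
     integrable Q (\<lambda>z. f (z a) * g (z b)) \<and> integral\<^sup>L Q (\<lambda>z. f (z a) * g (z b))
       = (\<integral>x. ?d a x * f x \<partial>lborel) * (\<integral>x. ?d b x * g x \<partial>lborel)"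
    unfolding Q_def by (rule pair_expect[of ?d, OF dm dnn d1]) auto
  have se: "\<And>a f. f \<in> borel_measurable borel \<Longrightarrow> integrable lborel (\<lambda>x. ?d a x * f x) \<Longrightarrow>
     integrable Q (\<lambda>z. f (z a)) \<and> integral\<^sup>L Q (\<lambda>z. f (z a)) = (\<integral>x. ?d a x * f x \<partial>lborel)"
    unfolding Q_def by (rule single_expect[of ?d, OF dm dnn d1]) auto
  have P1: "integrable Q (\<lambda>z. z (Inl i) * z (Inr j)) \<and> integral\<^sup>L Q (\<lambda>z. z (Inl i) * z (Inr j)) = \<mu> (Inl i) * \<mu> (Inr j)" for i j
    using pe[of "Inl i" "Inr j" "\<lambda>x. x" "\<lambda>x. x"] nq1[OF t] by simp
  have P2: "integrable Q (\<lambda>z. (z (Inl i))\<^sup>2 * (z (Inr j))\<^sup>2) \<and> integral\<^sup>L Q (\<lambda>z. (z (Inl i))\<^sup>2 * (z (Inr j))\<^sup>2) = ((\<mu> (Inl i))\<^sup>2 + t\<^sup>2) * ((\<mu> (Inr j))\<^sup>2 + t\<^sup>2)" for i j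
    using pe[of "Inl i" "Inr j" "\<lambda>x. x\<^sup>2" "\<lambda>x. x\<^sup>2"] nq2[OF t] by simp
  have P3: "integrable Q (\<lambda>z. ca k + cb k * z k + cc k * (z k)\<^sup>2) \<and> integral\<^sup>L Q (\<lambda>z. ca k + cb k * z k + cc k * (z k)\<^sup>2) = ca k + cb k * \<mu> k + cc k * ((\<mu> k)\<^sup>2 + t\<^sup>2)" for k
    using se[of "\<lambda>x. ca k + cb k * x + cc k * x\<^sup>2" k] normal_quad[OF t, of "\<mu> k" "ca k" "cb k" "cc k"] by simp
  have Bfe: "Bf X = (\<lambda>z. \<Sum>i\<in>UNIV. \<Sum>j\<in>UNIV. X$i$j * (z (Inl i) * z (Inr j)))"
    by (auto simp: Bf_def fun_eq_iff intro!: sum.cong)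
  show "integrable Q (Bf X) \<and> integral\<^sup>L Q (Bf X) = (\<Sum>i\<in>UNIV. \<Sum>j\<in>UNIV. \<mu> (Inl i) * X$i$j * \<mu> (Inr j))"
  proof -
    have r: "(\<Sum>i\<in>UNIV. \<Sum>j\<in>UNIV. \<mu> (Inl i) * X$i$j * \<mu> (Inr j)) = (\<Sum>i\<in>UNIV. \<Sum>j\<in>UNIV. X$i$j * (\<mu> (Inl i) * \<mu> (Inr j)))"
      by (simp add: mult_ac)
    show ?thesis
      unfolding Bfe r using P1 by (simp add: integrable_sum integral_sum)
  qed
  have Nfe: "Nf = (\<lambda>z::'m+'n\<Rightarrow>real. \<Sum>i\<in>UNIV. \<Sum>j\<in>UNIV. (z (Inl i))\<^sup>2 * (z (Inr j))\<^sup>2)"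
    by (auto simp: Nf_def fun_eq_iff sum_product)
  show "integrable Q Nf \<and> integral\<^sup>L Q Nf = (\<Sum>i\<in>UNIV. (\<mu> (Inl i))\<^sup>2 + t\<^sup>2) * (\<Sum>j\<in>UNIV. (\<mu> (Inr j))\<^sup>2 + t\<^sup>2)"
    unfolding Nfe using P2 by (simp add: integrable_sum integral_sum sum_product)
  show "integrable Q (\<lambda>z. \<Sum>k\<in>UNIV. ca k + cb k * z k + cc k * (z k)\<^sup>2)
       \<and> integral\<^sup>L Q (\<lambda>z. \<Sum>k\<in>UNIV. ca k + cb k * z k + cc k * (z k)\<^sup>2) = (\<Sum>k\<in>UNIV. ca k + cb k * \<mu> k + cc k * ((\<mu> k)\<^sup>2 + t\<^sup>2))"
    using P3 by (simp add: integrable_sum integral_sum)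
qed


lemma Bf_meas[measurable]: "Bf X \<in> borel_measurable (PiM UNIV (\<lambda>_. lborel))"
  unfolding Bf_def by measurable

lemma Nf_meas[measurable]: "Nf \<in> borel_measurable (PiM UNIV (\<lambda>_. lborel))"
  unfolding Nf_def by measurable

lemma std_ratio:
  fixes t m x :: real
  assumes t: "0 < t"
  shows "std_normal_density x = normal_density m t x *
     exp (ln t + m\<^sup>2 / (2 * t\<^sup>2) + (- m / t\<^sup>2) * x + (- 1/2 + 1 / (2 * t\<^sup>2)) * x\<^sup>2)"
proof -
  have e: "- (x - m)\<^sup>2 / (2 * t\<^sup>2) + (ln t + m\<^sup>2 / (2 * t\<^sup>2) + (- m / t\<^sup>2) * x + (- 1/2 + 1 / (2 * t\<^sup>2)) * x\<^sup>2)
     = ln t + (- x\<^sup>2 / 2)"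
    using t by (simp add: field_simps power2_eq_square)
  have s: "sqrt (2 * pi * t\<^sup>2) = sqrt (2 * pi) * t"
    using t by (simp add: real_sqrt_mult)
  have "normal_density m t x * exp (ln t + m\<^sup>2 / (2 * t\<^sup>2) + (- m / t\<^sup>2) * x + (- 1/2 + 1 / (2 * t\<^sup>2)) * x\<^sup>2)
      = 1 / sqrt (2 * pi * t\<^sup>2) * exp (ln t + (- x\<^sup>2 / 2))"
    by (simp only: normal_density_def mult.assoc exp_add[symmetric] e)
  also have "\<dots> = 1 / sqrt (2 * pi) * exp (- x\<^sup>2 / 2)"
  proof -
    have "exp (ln t + (- x\<^sup>2 / 2)) = t * exp (- x\<^sup>2 / 2)" using t by (simp only: exp_add exp_ln)
    then show ?thesis using t by (simp add: s)
  qed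
  finally show ?thesis by (simp add: normal_density_def)
qed


lemma sum_UNIV_plus:
  "(\<Sum>k\<in>(UNIV::('a::finite + 'b::finite) set). g k) = (\<Sum>i\<in>UNIV. g (Inl i)) + (\<Sum>j\<in>UNIV. g (Inr j))"
proof -
  have "(\<Sum>k\<in>(UNIV::('a + 'b) set). g k) = (\<Sum>k\<in>(UNIV <+> UNIV). g k)" by simp
  also have "\<dots> = (\<Sum>i\<in>UNIV. g (Inl i)) + (\<Sum>j\<in>UNIV. g (Inr j))"
    by (subst sum.Plus) auto
  finally show ?thesis .
qed

lemma sum_sq_norm: "(\<Sum>i\<in>UNIV. (u $ i)\<^sup>2) = (norm (u :: real^'m))\<^sup>2"
  by (simp only: power2_norm_eq_inner) (simp add: inner_vec_def power2_eq_square)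

lemma jensen_exp:
  assumes Q: "prob_space Q" and Fi: "integrable Q F"
  shows "ennreal (exp (integral\<^sup>L Q F)) \<le> (\<integral>\<^sup>+ z. ennreal (exp (F z)) \<partial>Q)"
proof (cases "(\<integral>\<^sup>+ z. ennreal (exp (F z)) \<partial>Q) = top")
  case True then show ?thesis by simp
next
  case False
  interpret prob_space Q by fact
  have Fm[measurable]: "F \<in> borel_measurable Q" using Fi by auto
  obtain r where r: "(\<integral>\<^sup>+ z. ennreal (exp (F z)) \<partial>Q) = ennreal r"
    using False by (cases "(\<integral>\<^sup>+ z. ennreal (exp (F z)) \<partial>Q)") auto
  have ei: "integrable Q (\<lambda>z. exp (F z))"
    by (rule integrableI_nn_integral_finite[OF _ _ r]) auto
  have ne: "(\<integral>\<^sup>+ z. ennreal (exp (F z)) \<partial>Q) = ennreal (\<integral>z. exp (F z) \<partial>Q)"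
    using ei by (intro nn_integral_eq_integral) auto
  define a where "a = integral\<^sup>L Q F"
  have li: "integrable Q (\<lambda>z. exp a + exp a * (F z - a))"
    using Fi by auto
  have "(\<integral>z. exp a + exp a * (F z - a) \<partial>Q) = exp a + exp a * (a - a)"
    using Fi by (simp add: a_def prob_space)
  then have "exp a = (\<integral>z. exp a + exp a * (F z - a) \<partial>Q)" by simp
  also have "\<dots> \<le> (\<integral>z. exp (F z) \<partial>Q)"
  proof (rule integral_mono[OF li ei])
    fix z
    have "exp a * (1 + (F z - a)) \<le> exp a * exp (F z - a)"
      by (intro mult_left_mono) auto
    also have "\<dots> = exp (F z)" by (simp add: exp_diff)
    finally show "exp a + exp a * (F z - a) \<le> exp (F z)" by (simp add: algebra_simps)
  qed
  finally show ?thesis unfolding ne a_def by simp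
qed


lemma DV:
  fixes X :: "real^'n::finite^'m::finite" and u0 :: "real^'m" and v0 :: "real^'n" and e l c :: real
  assumes e: "0 < e" "e < 1" and u0: "norm u0 = 1" and v0: "norm v0 = 1"
  shows "ennreal (exp (l * (e\<^sup>2 * sqrt (real CARD('m) * real CARD('n))) * (u0 \<bullet> (X *v v0))
            - c * (real CARD('m) * real CARD('n)) - (real CARD('m) + real CARD('n)) / 2 * ln (1 / (1 - e\<^sup>2))))
    \<le> (\<integral>\<^sup>+ z. ennreal ((\<Prod>k\<in>UNIV. std_normal_density (z k)) * exp (l * Bf X z - c * Nf z)) \<partial>PiM UNIV (\<lambda>_::'m+'n. lborel))"
proof -
  let ?L = "PiM UNIV (\<lambda>_::'m+'n. lborel :: real measure)"
  let ?m = "real CARD('m)" and ?n = "real CARD('n)"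
  have e2: "e\<^sup>2 < 1" using e by (simp add: power_less_one_iff abs_less_iff)
  define t where "t = sqrt (1 - e\<^sup>2)"
  have t: "0 < t" using e2 by (simp add: t_def)
  have t2: "t\<^sup>2 = 1 - e\<^sup>2" using e2 by (simp add: t_def)
  define \<mu> :: "'m+'n \<Rightarrow> real" where "\<mu> = case_sum (\<lambda>i. e * sqrt ?m * u0$i) (\<lambda>j. e * sqrt ?n * v0$j)"
  define c0 where "c0 = (\<lambda>k. ln t + (\<mu> k)\<^sup>2 / (2 * t\<^sup>2))"
  define c1 where "c1 = (\<lambda>k. - \<mu> k / t\<^sup>2)"
  define c2 where "c2 = (\<lambda>k::'m+'n. - 1/2 + 1 / (2 * t\<^sup>2))"
  define \<psi> where "\<psi> = (\<lambda>z::'m+'n\<Rightarrow>real. \<Prod>k\<in>UNIV. normal_density (\<mu> k) t (z k))"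
  define Q where "Q = density ?L \<psi>"
  define R where "R = (\<lambda>z::'m+'n\<Rightarrow>real. \<Sum>k\<in>UNIV. c0 k + c1 k * z k + c2 k * (z k)\<^sup>2)"
  define F where "F = (\<lambda>z. l * Bf X z - c * Nf z + R z)"
  have \<psi>m[measurable]: "\<psi> \<in> borel_measurable ?L" unfolding \<psi>_def by measurable
  have Rm[measurable]: "R \<in> borel_measurable ?L" unfolding R_def by measurable
  have Fm[measurable]: "F \<in> borel_measurable ?L" unfolding F_def by measurable
  have eqpt: "(\<Prod>k\<in>UNIV. std_normal_density (z k)) * exp (l * Bf X z - c * Nf z) = \<psi> z * exp (F z)" for z
  proof -
    have "(\<Prod>k\<in>UNIV. std_normal_density (z k)) = (\<Prod>k\<in>UNIV. normal_density (\<mu> k) t (z k) * exp (c0 k + c1 k * z k + c2 k * (z k)\<^sup>2))"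
      by (intro prod.cong refl) (unfold c0_def c1_def c2_def, rule std_ratio[OF t])
    also have "\<dots> = \<psi> z * exp (R z)"
      by (simp add: prod.distrib \<psi>_def R_def exp_sum)
    finally show ?thesis by (simp add: F_def exp_add)
  qed
  have Zeq: "(\<integral>\<^sup>+ z. ennreal ((\<Prod>k\<in>UNIV. std_normal_density (z k)) * exp (l * Bf X z - c * Nf z)) \<partial>?L)
      = (\<integral>\<^sup>+ z. ennreal (exp (F z)) \<partial>Q)"
  proof -
    have em: "ennreal (\<psi> z * exp (F z)) = ennreal (\<psi> z) * ennreal (exp (F z))" for z
      by (rule ennreal_mult) (auto simp: \<psi>_def intro!: prod_nonneg)
    show ?thesis
      unfolding eqpt Q_def em by (subst nn_integral_density) auto
  qed
  have E1: "integrable Q (Bf X) \<and> integral\<^sup>L Q (Bf X) = (\<Sum>i\<in>UNIV. \<Sum>j\<in>UNIV. \<mu> (Inl i) * X$i$j * \<mu> (Inr j))"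
    unfolding Q_def \<psi>_def by (rule EQ(1)[OF t])
  have E2: "integrable Q Nf \<and> integral\<^sup>L Q Nf = (\<Sum>i\<in>UNIV. (\<mu> (Inl i))\<^sup>2 + t\<^sup>2) * (\<Sum>j\<in>UNIV. (\<mu> (Inr j))\<^sup>2 + t\<^sup>2)"
    unfolding Q_def \<psi>_def by (rule EQ(2)[OF t])
  have E3: "integrable Q R \<and> integral\<^sup>L Q R = (\<Sum>k\<in>UNIV. c0 k + c1 k * \<mu> k + c2 k * ((\<mu> k)\<^sup>2 + t\<^sup>2))"
    unfolding Q_def \<psi>_def R_def by (rule EQ(3)[OF t])
  have Fi: "integrable Q F" unfolding F_def using E1 E2 E3 by auto
  have EF: "integral\<^sup>L Q F = l * integral\<^sup>L Q (Bf X) - c * integral\<^sup>L Q Nf + integral\<^sup>L Q R"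
    unfolding F_def using E1 E2 E3 by simp
  have Qp: "prob_space Q"
  proof
    have "integrable Q (\<lambda>z. 1::real) \<and> integral\<^sup>L Q (\<lambda>z. 1::real) = (\<integral>x. normal_density (\<mu> (Inl undefined)) t x * 1 \<partial>lborel)"
      unfolding Q_def \<psi>_def by (rule single_expect[where f="\<lambda>_. 1" and a="Inl undefined" and d="\<lambda>k. normal_density (\<mu> k) t"]) (use t in auto)
    then have "integrable Q (\<lambda>z. 1::real) \<and> integral\<^sup>L Q (\<lambda>z. 1::real) = 1" using t by simp
    then have "(\<integral>\<^sup>+ z. ennreal 1 \<partial>Q) = ennreal 1"
      by (subst nn_integral_eq_integral) auto
    then show "emeasure Q (space Q) = 1" by simp
  qed
  have J: "ennreal (exp (integral\<^sup>L Q F)) \<le> (\<integral>\<^sup>+ z. ennreal (exp (F z)) \<partial>Q)"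
    by (rule jensen_exp[OF Qp Fi])
  have B1: "integral\<^sup>L Q (Bf X) = e\<^sup>2 * sqrt (?m * ?n) * (u0 \<bullet> (X *v v0))"
  proof -
    have "integral\<^sup>L Q (Bf X) = (\<Sum>i\<in>UNIV. \<Sum>j\<in>UNIV. (e * sqrt ?m * u0$i) * X$i$j * (e * sqrt ?n * v0$j))"
      using E1 by (simp add: \<mu>_def)
    also have "\<dots> = e\<^sup>2 * sqrt (?m * ?n) * (\<Sum>i\<in>UNIV. \<Sum>j\<in>UNIV. u0$i * X$i$j * v0$j)"
      by (simp add: sum_distrib_left real_sqrt_mult power2_eq_square mult_ac)
    also have "(\<Sum>i\<in>UNIV. \<Sum>j\<in>UNIV. u0$i * X$i$j * v0$j) = u0 \<bullet> (X *v v0)"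
      by (simp add: inner_vec_def matrix_vector_mult_def sum_distrib_left mult.assoc)
    finally show ?thesis .
  qed
  have N1: "integral\<^sup>L Q Nf = ?m * ?n"
  proof -
    have a: "(\<Sum>i\<in>UNIV. (\<mu> (Inl i))\<^sup>2 + t\<^sup>2) = ?m"
    proof -
      have "(\<Sum>i\<in>UNIV. (\<mu> (Inl i))\<^sup>2 + t\<^sup>2) = e\<^sup>2 * ?m * (\<Sum>i\<in>UNIV. (u0$i)\<^sup>2) + ?m * t\<^sup>2"
        by (simp add: \<mu>_def sum.distrib power_mult_distrib sum_distrib_left mult_ac)
      also have "\<dots> = ?m" by (simp add: sum_sq_norm u0 t2 algebra_simps)
      finally show ?thesis .
    qed
    have b: "(\<Sum>j\<in>UNIV. (\<mu> (Inr j))\<^sup>2 + t\<^sup>2) = ?n"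
    proof -
      have "(\<Sum>j\<in>UNIV. (\<mu> (Inr j))\<^sup>2 + t\<^sup>2) = e\<^sup>2 * ?n * (\<Sum>j\<in>UNIV. (v0$j)\<^sup>2) + ?n * t\<^sup>2"
        by (simp add: \<mu>_def sum.distrib power_mult_distrib sum_distrib_left mult_ac)
      also have "\<dots> = ?n" by (simp add: sum_sq_norm v0 t2 algebra_simps)
      finally show ?thesis .
    qed
    show ?thesis using E2 a b by simp
  qed
  have R1: "integral\<^sup>L Q R = - (?m + ?n) / 2 * ln (1 / (1 - e\<^sup>2))"
  proof -
    have pk: "c0 k + c1 k * \<mu> k + c2 k * ((\<mu> k)\<^sup>2 + t\<^sup>2) = ln t - (\<mu> k)\<^sup>2 / 2 - t\<^sup>2 / 2 + 1 / 2" for k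
      using t by (simp add: c0_def c1_def c2_def field_simps power2_eq_square)
    have "integral\<^sup>L Q R = (\<Sum>k\<in>UNIV. ln t - (\<mu> k)\<^sup>2 / 2 - t\<^sup>2 / 2 + 1 / 2)"
      using E3 pk by simp
    also have "\<dots> = (\<Sum>i\<in>UNIV. ln t - e\<^sup>2 * ?m * (u0$i)\<^sup>2 / 2 - t\<^sup>2 / 2 + 1 / 2)
                    + (\<Sum>j\<in>UNIV. ln t - e\<^sup>2 * ?n * (v0$j)\<^sup>2 / 2 - t\<^sup>2 / 2 + 1 / 2)"
      by (simp add: sum_UNIV_plus \<mu>_def power_mult_distrib)
    also have "\<dots> = ?m * (ln t - t\<^sup>2 / 2 + 1 / 2) - e\<^sup>2 * ?m * (\<Sum>i\<in>UNIV. (u0$i)\<^sup>2) / 2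
                    + (?n * (ln t - t\<^sup>2 / 2 + 1 / 2) - e\<^sup>2 * ?n * (\<Sum>j\<in>UNIV. (v0$j)\<^sup>2) / 2)"
      by (simp add: sum_subtractf sum.distrib sum_distrib_left sum_divide_distrib algebra_simps)
    also have "\<dots> = (?m + ?n) * ln t"
      by (simp add: sum_sq_norm u0 v0 t2 algebra_simps) (simp add: field_simps)
    also have "ln t = - ln (1 / (1 - e\<^sup>2)) / 2"
      using e2 by (simp add: t_def ln_sqrt ln_div)
    finally show ?thesis by (simp add: algebra_simps)
  qed
  have "integral\<^sup>L Q F = l * (e\<^sup>2 * sqrt (?m * ?n)) * (u0 \<bullet> (X *v v0))
            - c * (?m * ?n) - (?m + ?n) / 2 * ln (1 / (1 - e\<^sup>2))"
    unfolding EF B1 N1 R1 by (simp add: algebra_simps) (simp add: field_simps)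
  then show ?thesis using J Zeq by simp
qed

lemma onorm_lip:
  fixes X Y :: "real^'n^'m"
  shows "onorm (\<lambda>x. X *v x) \<le> onorm (\<lambda>x. Y *v x) + real CARD('m) * real CARD('n) * norm (X - Y)"
proof -
  have "onorm (\<lambda>x. X *v x) = onorm (\<lambda>x. Y *v x + (X - Y) *v x)"
    by (simp add: matrix_vector_mult_diff_rdistrib)
  also have "\<dots> \<le> onorm (\<lambda>x. Y *v x) + onorm (\<lambda>x. (X - Y) *v x)"
    by (rule onorm_triangle) auto
  also have "onorm (\<lambda>x. (X - Y) *v x) \<le> real CARD('m) * real CARD('n) * norm (X - Y)"
  proof -
    have "\<bar>(X - Y) $ i $ j\<bar> \<le> norm (X - Y)" for i j
    proof -
      have "\<bar>(X - Y) $ i $ j\<bar> \<le> norm ((X - Y) $ i)" by (rule component_le_norm_cart)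
      also have "\<dots> \<le> norm (X - Y)" by (rule Finite_Cartesian_Product.norm_nth_le)
      finally show ?thesis .
    qed
    then show ?thesis using onorm_le_matrix_component[of "X - Y" "norm (X - Y)"] by simp
  qed
  finally show ?thesis by simp
qed

lemma onorm_cont: "continuous_on UNIV (\<lambda>X::real^'n^'m. onorm (\<lambda>x. X *v x))"
proof (rule lipschitz_on_continuous_on)
  show "(real CARD('m) * real CARD('n))-lipschitz_on UNIV (\<lambda>X::real^'n^'m. onorm (\<lambda>x. X *v x))"
  proof (rule lipschitz_onI)
    fix X Y :: "real^'n^'m"
    have a1: "onorm (\<lambda>x. X *v x) \<le> onorm (\<lambda>x. Y *v x) + real CARD('m) * real CARD('n) * norm (X - Y)"
      by (rule onorm_lip)
    have a2: "onorm (\<lambda>x. Y *v x) \<le> onorm (\<lambda>x. X *v x) + real CARD('m) * real CARD('n) * norm (Y - X)"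
      by (rule onorm_lip)
    show "dist (onorm (\<lambda>x. X *v x)) (onorm (\<lambda>x. Y *v x)) \<le> real CARD('m) * real CARD('n) * dist X Y"
    proof -
      have "norm (Y - X) = norm (X - Y)" by (rule norm_minus_commute)
      moreover have "dist X Y = norm (X - Y)" by (rule dist_norm)
      ultimately show ?thesis using a1 a2 by (simp add: dist_real_def abs_le_iff)
    qed
  qed simp
qed

lemma onorm_meas:
  fixes A :: "'a \<Rightarrow> real^'n^'m"
  assumes "A \<in> borel_measurable M"
  shows "(\<lambda>w. onorm (\<lambda>x. A w *v x)) \<in> borel_measurable M"
proof -
  have "(\<lambda>X::real^'n^'m. onorm (\<lambda>x. X *v x)) \<in> borel_measurable borel"
    by (rule borel_measurable_continuous_onI[OF onorm_cont])
  from measurable_compose[OF assms this] show ?thesis by simp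
qed

lemma onorm_from_bilinear:
  fixes X :: "real^'n^'m"
  assumes H: "\<And>u v. norm u = 1 \<Longrightarrow> norm v = 1 \<Longrightarrow> u \<bullet> (X *v v) \<le> R" and R: "0 \<le> R"
  shows "onorm (\<lambda>x. X *v x) \<le> R"
proof (rule onorm_le)
  fix x :: "real^'n"
  show "norm (X *v x) \<le> R * norm x"
  proof (cases "x = 0")
    case True then show ?thesis by simp
  next
    case False
    define v where "v = x /\<^sub>R norm x"
    have nv: "norm v = 1" using False by (simp add: v_def)
    have xv: "x = norm x *\<^sub>R v" using False by (simp add: v_def)
    define y where "y = X *v v"
    have Xx: "X *v x = norm x *\<^sub>R y" unfolding y_def by (subst xv) (simp add: matrix_vector_mult_scaleR)
    have "norm y \<le> R"
    proof (cases "y = 0")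
      case True then show ?thesis using R by simp
    next
      case False
      define u where "u = y /\<^sub>R norm y"
      have nu: "norm u = 1" using False by (simp add: u_def)
      have "u \<bullet> y = norm y" using False by (simp add: u_def inner_scaleR_left dot_square_norm power2_eq_square)
      then show ?thesis using H[OF nu nv] by (simp add: y_def)
    qed
    then show ?thesis unfolding Xx by (simp add: mult.commute mult_right_mono)
  qed
qed

lemma alg:
  fixes \<sigma> e K D P X l :: real
  assumes s: "0 < \<sigma>" and e: "0 < e" and K: "0 \<le> K" and D: "0 < D" and P: "0 < P"
    and l: "l = sqrt (2 * (K + D)) / \<sigma> / P"
    and H: "l * (e\<^sup>2 * P) * X - l\<^sup>2 * \<sigma>\<^sup>2 / 2 * P\<^sup>2 - K < D"
  shows "X \<le> \<sigma> * sqrt (2 * (K + D) / e ^ 4)"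
proof -
  define S where "S = sqrt (2 * (K + D))"
  have S: "0 < S" "S\<^sup>2 = 2 * (K + D)" using K D by (auto simp: S_def)
  define l' where "l' = S / \<sigma>"
  have l'p: "0 < l'" using S s by (simp add: l'_def)
  have lP: "l * P = l'" using P by (simp add: l l'_def S_def)
  have H2: "l' * e\<^sup>2 * X < l'\<^sup>2 * \<sigma>\<^sup>2 / 2 + K + D"
  proof -
    have h1: "l * (e\<^sup>2 * P) * X = l' * e\<^sup>2 * X" using lP by (simp add: mult_ac)
    have h2: "l\<^sup>2 * \<sigma>\<^sup>2 / 2 * P\<^sup>2 = l'\<^sup>2 * \<sigma>\<^sup>2 / 2"
    proof -
      have "l\<^sup>2 * P\<^sup>2 = l'\<^sup>2" using lP by (metis power_mult_distrib)
      then show ?thesis by (metis (no_types, lifting) mult.commute mult.left_commute times_divide_eq_left)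
    qed
    show ?thesis using H h1 h2 by linarith
  qed
  have kd: "l'\<^sup>2 * \<sigma>\<^sup>2 / 2 = K + D" using s S by (simp add: l'_def power_divide)
  have ma: "l' * (e\<^sup>2 * X) = l' * e\<^sup>2 * X" by (simp add: mult.assoc)
  have "l' * e\<^sup>2 * X < 2 * (K + D)" using H2 unfolding kd by simp
  then have "l' * (e\<^sup>2 * X) < 2 * (K + D)" by (simp only: ma)
  then have "e\<^sup>2 * X < 2 * (K + D) / l'" using l'p by (simp add: field_simps)
  also have "2 * (K + D) / l' = \<sigma> * S"
  proof -
    have "2 * (K + D) = S * S" using S(2) by (simp add: power2_eq_square)
    then show ?thesis using S(1) s by (simp add: l'_def field_simps)
  qed
  finally have "X < \<sigma> * S / e\<^sup>2" using e by (simp add: field_simps)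
  also have "\<sigma> * S / e\<^sup>2 = \<sigma> * sqrt (2 * (K + D) / e ^ 4)"
  proof -
    have "sqrt (2 * (K + D) / e ^ 4) = S / e\<^sup>2"
    proof -
      have "sqrt (e ^ 4) = e\<^sup>2" by (rule real_sqrt_unique) auto
      then show ?thesis by (simp add: S_def real_sqrt_divide)
    qed
    then show ?thesis by simp
  qed
  finally show ?thesis by simp
qed




lemma nn_phi: "(\<integral>\<^sup>+ z. ennreal (\<Prod>k\<in>UNIV. std_normal_density (z k)) \<partial>PiM UNIV (\<lambda>_::'i::finite. lborel)) = 1"
proof -
  let ?L = "PiM UNIV (\<lambda>_::'i. lborel :: real measure)"
  have "integrable (density ?L (\<lambda>z. \<Prod>k\<in>UNIV. std_normal_density (z k))) (\<lambda>z. 1::real)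
      \<and> integral\<^sup>L (density ?L (\<lambda>z. \<Prod>k\<in>UNIV. std_normal_density (z k))) (\<lambda>z. 1::real)
        = (\<integral>x. std_normal_density x * 1 \<partial>lborel)"
    by (rule single_expect[where f="\<lambda>_. 1" and a="undefined" and d="\<lambda>k. std_normal_density"]) auto
  then have "integrable (density ?L (\<lambda>z. \<Prod>k\<in>UNIV. std_normal_density (z k))) (\<lambda>z. 1::real)
      \<and> integral\<^sup>L (density ?L (\<lambda>z. \<Prod>k\<in>UNIV. std_normal_density (z k))) (\<lambda>z. 1::real) = 1" by simp
  then have "(\<integral>\<^sup>+ z. ennreal 1 \<partial>density ?L (\<lambda>z. \<Prod>k\<in>UNIV. std_normal_density (z k))) = ennreal 1"
    by (subst nn_integral_eq_integral) auto
  then show ?thesis by (subst (asm) nn_integral_density) auto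
qed

theorem theorem4:
  fixes M :: "'a measure" and A :: "'a \<Rightarrow> real^'n^'m" and \<sigma> \<delta> \<epsilon> :: real
  assumes "prob_space M"
    and "subgaussian_matrix M A \<sigma>"
    and "\<sigma> > 0"
    and "0 < \<delta>" and "\<delta> < 1"
    and "0 < \<epsilon>" and "\<epsilon> < 1"
  shows "measure M {w \<in> space M. onorm (\<lambda>x. A w *v x) \<le>
           \<sigma> * sqrt (ln (1 / (1 - \<epsilon>\<^sup>2)) / \<epsilon> ^ 4 * real (CARD('m) + CARD('n))
                    + 2 / \<epsilon> ^ 4 * ln (1 / \<delta>))} \<ge> 1 - \<delta>"
proof -
  note sg = assms(2)
  interpret P: prob_space M by fact
  have Am[measurable]: "A \<in> borel_measurable M" using sg unfolding subgaussian_matrix_def by auto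
  let ?L = "PiM UNIV (\<lambda>_::'m+'n. lborel :: real measure)"
  interpret PS: product_sigma_finite "\<lambda>_::'m+'n. lborel :: real measure" by standard
  interpret L: sigma_finite_measure ?L by (rule PS.sigma_finite) simp
  interpret MP: pair_sigma_finite M ?L
    unfolding pair_sigma_finite_def
    using prob_space_imp_sigma_finite[OF assms(1)] L.sigma_finite_measure_axioms by simp
  define m where "m = real CARD('m)"
  define n where "n = real CARD('n)"
  define Lg where "Lg = ln (1 / (1 - \<epsilon>\<^sup>2))"
  define K where "K = (m + n) / 2 * Lg"
  define D where "D = ln (1 / \<delta>)"
  define PP where "PP = sqrt (m * n)"
  define l where "l = sqrt (2 * (K + D)) / \<sigma> / PP"
  define R where "R = \<sigma> * sqrt (ln (1 / (1 - \<epsilon>\<^sup>2)) / \<epsilon> ^ 4 * real (CARD('m) + CARD('n)) + 2 / \<epsilon> ^ 4 * ln (1 / \<delta>))"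
  define f where "f = (\<lambda>w (z::'m+'n\<Rightarrow>real). ennreal ((\<Prod>k\<in>UNIV. std_normal_density (z k)) * exp (l * Bf (A w) z - l\<^sup>2 * \<sigma>\<^sup>2 / 2 * Nf z)))"
  define Z where "Z = (\<lambda>w. \<integral>\<^sup>+ z. f w z \<partial>?L)"
  have e2: "\<epsilon>\<^sup>2 < 1" using assms(6,7) by (simp add: power_less_one_iff abs_less_iff)
  have Lg: "0 \<le> Lg" unfolding Lg_def using e2 assms(6) by (simp add: ln_div)
  have mpos: "0 < m" "0 < n" by (auto simp: m_def n_def)
  have K: "0 \<le> K" unfolding K_def using Lg mpos by simp
  have D: "0 < D" unfolding D_def using assms(4,5) by (simp add: ln_div)
  have PP: "0 < PP" "PP\<^sup>2 = m * n" unfolding PP_def using mpos by auto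
  have fm: "case_prod f \<in> borel_measurable (M \<Otimes>\<^sub>M ?L)"
    unfolding f_def Bf_def Nf_def by measurable
  have Zm[measurable]: "Z \<in> borel_measurable M"
    unfolding Z_def by (rule L.borel_measurable_nn_integral[OF fm])
  have inner: "(\<integral>\<^sup>+ w. f w z \<partial>M) \<le> ennreal (\<Prod>k\<in>UNIV. std_normal_density (z k))" for z
  proof -
    note s1 = step1[OF assms(1) sg, where l=l and z=z]
    let ?g = "\<lambda>w. exp (l * Bf (A w) z - l\<^sup>2 * \<sigma>\<^sup>2 / 2 * Nf z)"
    let ?p = "\<Prod>k\<in>UNIV. std_normal_density (z k)"
    have gm: "(\<lambda>w. ennreal (?g w)) \<in> borel_measurable M" unfolding Bf_def Nf_def by measurable
    have p0: "0 \<le> ?p" by (auto intro!: prod_nonneg)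
    have "(\<integral>\<^sup>+ w. f w z \<partial>M) = (\<integral>\<^sup>+ w. ennreal ?p * ennreal (?g w) \<partial>M)"
      unfolding f_def using p0 by (intro nn_integral_cong) (simp add: ennreal_mult)
    also have "\<dots> = ennreal ?p * (\<integral>\<^sup>+ w. ennreal (?g w) \<partial>M)"
      by (rule nn_integral_cmult[OF gm])
    also have "(\<integral>\<^sup>+ w. ennreal (?g w) \<partial>M) = ennreal (\<integral>w. ?g w \<partial>M)"
      using s1 by (intro nn_integral_eq_integral) auto
    also have "ennreal ?p * ennreal (\<integral>w. ?g w \<partial>M) \<le> ennreal ?p * 1"
      using s1 by (intro mult_left_mono) auto
    finally show ?thesis by simp
  qed
  have intZ: "(\<integral>\<^sup>+ w. Z w \<partial>M) \<le> 1"
  proof -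
    have "(\<integral>\<^sup>+ w. Z w \<partial>M) = (\<integral>\<^sup>+ z. (\<integral>\<^sup>+ w. f w z \<partial>M) \<partial>?L)"
      unfolding Z_def using MP.Fubini'[OF fm] by simp
    also have "\<dots> \<le> (\<integral>\<^sup>+ z. ennreal (\<Prod>k\<in>UNIV. std_normal_density (z k)) \<partial>?L)"
      by (intro nn_integral_mono inner)
    also have "\<dots> = 1" by (rule nn_phi)
    finally show ?thesis .
  qed
  define Bd where "Bd = {w \<in> space M. 1 \<le> ennreal \<delta> * Z w}"
  have Bdm[measurable]: "Bd \<in> sets M" unfolding Bd_def by measurable
  have "emeasure M Bd \<le> ennreal \<delta> * (\<integral>\<^sup>+ w. Z w * indicator (space M) w \<partial>M)"
    unfolding Bd_def by (rule nn_integral_Markov_inequality) auto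
  also have "(\<integral>\<^sup>+ w. Z w * indicator (space M) w \<partial>M) = (\<integral>\<^sup>+ w. Z w \<partial>M)"
    by (intro nn_integral_cong) simp
  also have "ennreal \<delta> * (\<integral>\<^sup>+ w. Z w \<partial>M) \<le> ennreal \<delta> * 1"
    by (intro mult_left_mono intZ) simp
  finally have "emeasure M Bd \<le> ennreal \<delta>" by simp
  then have mBd: "measure M Bd \<le> \<delta>"
    using assms(4) by (simp add: P.emeasure_eq_measure)
  have good: "onorm (\<lambda>x. A w *v x) \<le> R" if w: "w \<in> space M" "w \<notin> Bd" for w
  proof -
    have lt: "ennreal \<delta> * Z w < 1" using w unfolding Bd_def by auto
    have "0 \<le> ln (1 / (1 - \<epsilon>\<^sup>2)) / \<epsilon> ^ 4 * real (CARD('m) + CARD('n)) + 2 / \<epsilon> ^ 4 * ln (1 / \<delta>)"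
      using Lg D unfolding Lg_def D_def
      by (intro add_nonneg_nonneg mult_nonneg_nonneg divide_nonneg_nonneg) auto
    then have Rnn: "0 \<le> R" unfolding R_def using assms(3) by simp
    show ?thesis
    proof (rule onorm_from_bilinear[OF _ Rnn])
      fix u0 :: "real^'m" and v0 :: "real^'n"
      assume u0: "norm u0 = 1" and v0: "norm v0 = 1"
      define X where "X = u0 \<bullet> (A w *v v0)"
      define E where "E = l * (\<epsilon>\<^sup>2 * sqrt (m * n)) * X - l\<^sup>2 * \<sigma>\<^sup>2 / 2 * (m * n) - (m + n) / 2 * ln (1 / (1 - \<epsilon>\<^sup>2))"
      have dv: "ennreal (exp E) \<le> Z w"
        unfolding E_def X_def Z_def f_def m_def n_def
        by (rule DV[OF assms(6,7) u0 v0])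
      have "ennreal (\<delta> * exp E) = ennreal \<delta> * ennreal (exp E)"
        using assms(4) by (simp add: ennreal_mult)
      also have "\<dots> \<le> ennreal \<delta> * Z w" by (intro mult_left_mono dv) simp
      also have "\<dots> < 1" by (rule lt)
      finally have "\<delta> * exp E < 1" by simp
      then have "exp E < 1 / \<delta>" using assms(4) by (simp add: field_simps)
      then have "ln (exp E) < ln (1 / \<delta>)" using assms(4) by (subst ln_less_cancel_iff) auto
      then have ED: "E < D" unfolding D_def by simp
      have EE: "E = l * (\<epsilon>\<^sup>2 * PP) * X - l\<^sup>2 * \<sigma>\<^sup>2 / 2 * PP\<^sup>2 - K"
        unfolding E_def K_def Lg_def PP_def using mpos by simp
      have H: "l * (\<epsilon>\<^sup>2 * PP) * X - l\<^sup>2 * \<sigma>\<^sup>2 / 2 * PP\<^sup>2 - K < D"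
        using ED unfolding EE .
      have "X \<le> \<sigma> * sqrt (2 * (K + D) / \<epsilon> ^ 4)"
        by (rule alg[OF assms(3) assms(6) K D PP(1) l_def H])
      also have "2 * (K + D) / \<epsilon> ^ 4 = ln (1 / (1 - \<epsilon>\<^sup>2)) / \<epsilon> ^ 4 * real (CARD('m) + CARD('n)) + 2 / \<epsilon> ^ 4 * ln (1 / \<delta>)"
        unfolding K_def D_def Lg_def m_def n_def by (simp add: add_divide_distrib algebra_simps)
      finally show "u0 \<bullet> (A w *v v0) \<le> R" unfolding R_def X_def .
    qed
  qed
  have Sm: "{w \<in> space M. onorm (\<lambda>x. A w *v x) \<le> R} \<in> sets M"
    using onorm_meas[OF Am] by measurable
  have "1 - \<delta> \<le> 1 - measure M Bd" using mBd by simp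
  also have "\<dots> = measure M (space M - Bd)" by (rule P.prob_compl[symmetric, OF Bdm])
  also have "\<dots> \<le> measure M {w \<in> space M. onorm (\<lambda>x. A w *v x) \<le> R}"
    by (rule P.finite_measure_mono[OF _ Sm]) (auto intro: good)
  finally show ?thesis unfolding R_def .
qed

end
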